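(* Let $\mathcal{D} = \{(1,2),(3,2),(3,4),(5,4),(5,1)\}$ and $\epsilon\ge 0$. Let $\mu$ be a probability measure on a measurable space $\Lambda$ of hidden variables. Suppose that for each $h\in\Lambda$ we are given numbers $p_i(h)\in[0,1]$ for $i\in\{1,\dots,5\}$ and $q_{(i,j)}(h)\in[0,1]$ for $(i,j)\in\mathcal{D}$, measurable in $h$, with the following interpretation: $p_i(h)=\Pr(A_i=1\mid \#1=i,h)$ is the probability that measurement $i$, when performed first, yields outcome $+1$, and $q_{(i,j)}(h)=\Pr(A_j=1\mid \#1=i,\#2=j,h)$ is the probability that measurement $j$, performed second after $i$, yields $+1$ (outcomes are $\pm1$). Assume sequentiality: for each $h$ and $(i,j)\in\mathcal{D}$, $\Pr(A_i=a_i,A_j=a_j\mid \#1=i,\#2=j,h)=\Pr(A_i=a_i\mid\#1=i,h)\Pr(A_j=a_j\mid\#1=i,\#2=j,h)$. Assume bounded incompatibility: there are measurable $\epsilon_{(i,j),h}\in[0,1]$ with $|\Pr(A_j=a\mid \#1=j,h)-\Pr(A_j=a\mid\#1=i,\#2=j,h)|\le \epsilon_{(i,j),h}$ for all $h$, $(i,j)\in\mathcal{D}$, $a\in\{\pm1\}$, and $\frac15\int \mathrm{d}\mu(h)\sum_{(i,j)\in\mathcal{D}}\epsilon_{(i,j),h}\le\epsilon$. Consider the game in which an ordered context $(i,j)\in\mathcal{D}$ is selected uniformly at random (probability $1/5$ each, independently of $h$), $i$ is measured first and $j$ second, and the game is won iff the two outcomes differ. Then the winning probability $$\beta_{\mathrm{win}}=\frac15\int\mathrm{d}\mu(h)\sum_{(i,j)\in\mathcal{D}}\sum_{a\in\{-1,1\}}\Pr(A_i=a,A_j=-a\mid\#1=i,\#2=j,h)$$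 satisfies $\beta_{\mathrm{win}}\le \frac45+\epsilon$.
   Context: This is the single-trial winning probability of an $\epsilon$-bounded noncontextual hidden variable model in the KCBS win/lose game (five $\pm1$-valued measurements arranged in a pentagon, ordered contexts in $\mathcal{D}$). $\Pr(A_j=a\mid\#1=j,h)$ denotes the probability of outcome $a$ when $j$ is measured first (so $\Pr(A_j=1\mid\#1=j,h)=p_j(h)$). *)

theory Defs
  imports "HOL-Probability.Probability"
begin

definition KCBS_D :: "(nat \<times> nat) set" where
  "KCBS_D = {(1,2),(3,2),(3,4),(5,4),(5,1)}"

text \<open>Pr(A_i = a | #1 = i, h) for a in {-1,1}, from p_i(h) = Pr(A_i = 1 | #1 = i, h).\<close>
definition pr_first :: "(nat \<Rightarrow> 'h \<Rightarrow> real) \<Rightarrow> nat \<Rightarrow> int \<Rightarrow> 'h \<Rightarrow> real" where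
  "pr_first p i a h = (if a = 1 then p i h else 1 - p i h)"

text \<open>Pr(A_j = a | #1 = i, #2 = j, h), from q_(i,j)(h) = Pr(A_j = 1 | #1 = i, #2 = j, h).\<close>
definition pr_second :: "(nat \<Rightarrow> nat \<Rightarrow> 'h \<Rightarrow> real) \<Rightarrow> nat \<Rightarrow> nat \<Rightarrow> int \<Rightarrow> 'h \<Rightarrow> real" where
  "pr_second q i j a h = (if a = 1 then q i j h else 1 - q i j h)"

end

theory Submission
  imports Defs
begin

definition F :: "real \<Rightarrow> real \<Rightarrow> real \<Rightarrow> real \<Rightarrow> real \<Rightarrow> real" where
 "F a b c d e = (a+b-2*a*b)+(b+c-2*b*c)+(c+d-2*c*d)+(d+e-2*d*e)+(e+a-2*e*a)"
lemma conv: fixes x A B C :: real shows "0\<le>x \<Longrightarrow> x\<le>1 \<Longrightarrow> A\<le>C \<Longrightarrow> B\<le>C \<Longrightarrow> x*A+(1-x)*B \<le> C"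
proof -
  assume h: "0\<le>x" "x\<le>1" "A\<le>C" "B\<le>C"
  have "x*A \<le> x*C" using h by (intro mult_left_mono) auto
  moreover have "(1-x)*B \<le> (1-x)*C" using h by (intro mult_left_mono) auto
  ultimately show ?thesis by (simp add: algebra_simps)
qed
lemma F0: "a\<in>{0,1} \<Longrightarrow> b\<in>{0,1} \<Longrightarrow> c\<in>{0,1} \<Longrightarrow> d\<in>{0,1} \<Longrightarrow> e\<in>{0,1} \<Longrightarrow> F a b c d e \<le> 4"
  by (auto simp: F_def)
lemma F1: "a\<in>{0,1} \<Longrightarrow> b\<in>{0,1} \<Longrightarrow> c\<in>{0,1} \<Longrightarrow> d\<in>{0,1} \<Longrightarrow> 0\<le>e \<Longrightarrow> e\<le>1 \<Longrightarrow> F a b c d e \<le> 4"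
proof -
  assume h: "a\<in>{0,1}" "b\<in>{0,1}" "c\<in>{0,1}" "d\<in>{0,1}" "0\<le>e" "e\<le>1"
  have "F a b c d e = e * F a b c d 1 + (1-e) * F a b c d 0" by (simp add: F_def algebra_simps)
  also have "\<dots> \<le> 4" by (rule conv) (use h F0 in auto)
  finally show ?thesis .
qed
lemma F2: "a\<in>{0,1} \<Longrightarrow> b\<in>{0,1} \<Longrightarrow> c\<in>{0,1} \<Longrightarrow> 0\<le>d \<Longrightarrow> d\<le>1 \<Longrightarrow> 0\<le>e \<Longrightarrow> e\<le>1 \<Longrightarrow> F a b c d e \<le> 4"
proof -
  assume h: "a\<in>{0,1}" "b\<in>{0,1}" "c\<in>{0,1}" "0\<le>d" "d\<le>1" "0\<le>e" "e\<le>1"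
  have "F a b c d e = d * F a b c 1 e + (1-d) * F a b c 0 e" by (simp add: F_def algebra_simps)
  also have "\<dots> \<le> 4" by (rule conv) (use h F1 in auto)
  finally show ?thesis .
qed
lemma F3: "a\<in>{0,1} \<Longrightarrow> b\<in>{0,1} \<Longrightarrow> 0\<le>c \<Longrightarrow> c\<le>1 \<Longrightarrow> 0\<le>d \<Longrightarrow> d\<le>1 \<Longrightarrow> 0\<le>e \<Longrightarrow> e\<le>1 \<Longrightarrow> F a b c d e \<le> 4"
proof -
  assume h: "a\<in>{0,1}" "b\<in>{0,1}" "0\<le>c" "c\<le>1" "0\<le>d" "d\<le>1" "0\<le>e" "e\<le>1"
  have "F a b c d e = c * F a b 1 d e + (1-c) * F a b 0 d e" by (simp add: F_def algebra_simps)
  also have "\<dots> \<le> 4" by (rule conv) (use h F2 in auto)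
  finally show ?thesis .
qed
lemma F4: "a\<in>{0,1} \<Longrightarrow> 0\<le>b \<Longrightarrow> b\<le>1 \<Longrightarrow> 0\<le>c \<Longrightarrow> c\<le>1 \<Longrightarrow> 0\<le>d \<Longrightarrow> d\<le>1 \<Longrightarrow> 0\<le>e \<Longrightarrow> e\<le>1 \<Longrightarrow> F a b c d e \<le> 4"
proof -
  assume h: "a\<in>{0,1}" "0\<le>b" "b\<le>1" "0\<le>c" "c\<le>1" "0\<le>d" "d\<le>1" "0\<le>e" "e\<le>1"
  have "F a b c d e = b * F a 1 c d e + (1-b) * F a 0 c d e" by (simp add: F_def algebra_simps)
  also have "\<dots> \<le> 4" by (rule conv) (use h F3 in auto)
  finally show ?thesis .
qed
lemma F5: "0\<le>a \<Longrightarrow> a\<le>1 \<Longrightarrow> 0\<le>b \<Longrightarrow> b\<le>1 \<Longrightarrow> 0\<le>c \<Longrightarrow> c\<le>1 \<Longrightarrow> 0\<le>d \<Longrightarrow> d\<le>1 \<Longrightarrow> 0\<le>e \<Longrightarrow> e\<le>1 \<Longrightarrow> F a b c d e \<le> 4"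
proof -
  assume h: "0\<le>a" "a\<le>1" "0\<le>b" "b\<le>1" "0\<le>c" "c\<le>1" "0\<le>d" "d\<le>1" "0\<le>e" "e\<le>1"
  have "F a b c d e = a * F 1 b c d e + (1-a) * F 0 b c d e" by (simp add: F_def algebra_simps)
  also have "\<dots> \<le> 4" by (rule conv) (use h F4 in auto)
  finally show ?thesis .
qed
lemma ctx: fixes x y q e :: real
  assumes "0\<le>x" "x\<le>1" "\<bar>y - q\<bar> \<le> e"
  shows "x*(1-q) + (1-x)*q \<le> (x+y-2*x*y) + e"
proof -
  have "x*(1-q) + (1-x)*q - (x+y-2*x*y) = (q-y)*(1-2*x)" by (simp add: algebra_simps)
  also have "\<dots> \<le> \<bar>q-y\<bar> * \<bar>1-2*x\<bar>" by (metis abs_ge_self abs_mult)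
  also have "\<dots> \<le> \<bar>q-y\<bar>" using assms by (intro mult_left_le) auto
  finally show ?thesis using assms by linarith
qed

theorem mainTheorem1:
  fixes M :: "'h measure"
    and p :: "nat \<Rightarrow> 'h \<Rightarrow> real"
    and q :: "nat \<Rightarrow> nat \<Rightarrow> 'h \<Rightarrow> real"
    and J :: "nat \<Rightarrow> nat \<Rightarrow> int \<Rightarrow> int \<Rightarrow> 'h \<Rightarrow> real"
    and eps :: "nat \<Rightarrow> nat \<Rightarrow> 'h \<Rightarrow> real"
    and \<epsilon> :: real
  assumes "prob_space M"
    and "\<epsilon> \<ge> 0"
    and p_range: "\<And>i h. i \<in> {1..5} \<Longrightarrow> h \<in> space M \<Longrightarrow> 0 \<le> p i h \<and> p i h \<le> 1"
    and q_range: "\<And>i j h. (i, j) \<in> KCBS_D \<Longrightarrow> h \<in> space M \<Longrightarrow> 0 \<le> q i j h \<and> q i j h \<le> 1"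
    and p_meas: "\<And>i. i \<in> {1..5} \<Longrightarrow> p i \<in> borel_measurable M"
    and q_meas: "\<And>i j. (i, j) \<in> KCBS_D \<Longrightarrow> q i j \<in> borel_measurable M"
    and sequentiality: "\<And>i j ai aj h. (i, j) \<in> KCBS_D \<Longrightarrow> ai \<in> {-1, 1} \<Longrightarrow> aj \<in> {-1, 1} \<Longrightarrow>
        h \<in> space M \<Longrightarrow> J i j ai aj h = pr_first p i ai h * pr_second q i j aj h"
    and eps_range: "\<And>i j h. (i, j) \<in> KCBS_D \<Longrightarrow> h \<in> space M \<Longrightarrow> 0 \<le> eps i j h \<and> eps i j h \<le> 1"
    and eps_meas: "\<And>i j. (i, j) \<in> KCBS_D \<Longrightarrow> eps i j \<in> borel_measurable M"
    and bounded_incompat: "\<And>i j a h. (i, j) \<in> KCBS_D \<Longrightarrow> a \<in> {-1, 1} \<Longrightarrow> h \<in> space M \<Longrightarrow>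
        \<bar>pr_first p j a h - pr_second q i j a h\<bar> \<le> eps i j h"
    and eps_avg: "(1/5) * (\<integral>h. (\<Sum>(i, j)\<in>KCBS_D. eps i j h) \<partial>M) \<le> \<epsilon>"
  shows "(1/5) * (\<integral>h. (\<Sum>(i, j)\<in>KCBS_D. \<Sum>a\<in>{-1, 1::int}. J i j a (-a) h) \<partial>M) \<le> 4/5 + \<epsilon>"
proof -
  interpret P: prob_space M by fact
  let ?f = "\<lambda>h. (\<Sum>(i, j)\<in>KCBS_D. \<Sum>a\<in>{-1, 1::int}. J i j a (-a) h)"
  let ?g = "\<lambda>h. (\<Sum>(i, j)\<in>KCBS_D. eps i j h)"
  have D: "(1::nat,2::nat) \<in> KCBS_D" "(3::nat,2::nat) \<in> KCBS_D" "(3::nat,4::nat) \<in> KCBS_D"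
    "(5::nat,4::nat) \<in> KCBS_D" "(5::nat,1::nat) \<in> KCBS_D" by (auto simp: KCBS_D_def)
  have gexp: "?g h = eps 1 2 h + eps 3 2 h + eps 3 4 h + eps 5 4 h + eps 5 1 h" for h
    by (simp add: KCBS_D_def)
  have gmeas: "?g \<in> borel_measurable M"
    unfolding gexp using eps_meas[OF D(1)] eps_meas[OF D(2)] eps_meas[OF D(3)] eps_meas[OF D(4)] eps_meas[OF D(5)]
    by measurable
  have gint: "integrable M ?g"
  proof (rule P.integrable_const_bound[where B=5])
    show "AE x in M. norm (?g x) \<le> 5"
    proof (rule AE_I2)
      fix x assume x: "x \<in> space M"
      show "norm (?g x) \<le> 5" unfolding gexp
        using eps_range[OF D(1) x] eps_range[OF D(2) x] eps_range[OF D(3) x] eps_range[OF D(4) x] eps_range[OF D(5) x]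
        by simp
    qed
  qed (fact gmeas)
  have ctxb: "J i j 1 (-1) h + J i j (-1) 1 h \<le> (p i h + p j h - 2 * p i h * p j h) + eps i j h"
    if ij: "(i,j) \<in> KCBS_D" and h: "h \<in> space M" for i j h
  proof -
    have i5: "i \<in> {1..5}" using ij by (auto simp: KCBS_D_def)
    have "J i j 1 (-1) h + J i j (-1) 1 h = p i h * (1 - q i j h) + (1 - p i h) * q i j h"
      using sequentiality[OF ij _ _ h, of 1 "-1"] sequentiality[OF ij _ _ h, of "-1" 1]
      by (simp add: pr_first_def pr_second_def)
    also have "\<dots> \<le> (p i h + p j h - 2 * p i h * p j h) + eps i j h"
      using p_range[OF i5 h] bounded_incompat[OF ij _ h, of 1]
      by (intro ctx) (auto simp: pr_first_def pr_second_def)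
    finally show ?thesis .
  qed
  have pw: "?f h \<le> 4 + ?g h" if h: "h \<in> space M" for h
  proof -
    have fexp: "?f h = (J 1 2 1 (-1) h + J 1 2 (-1) 1 h) + (J 3 2 1 (-1) h + J 3 2 (-1) 1 h)
       + (J 3 4 1 (-1) h + J 3 4 (-1) 1 h) + (J 5 4 1 (-1) h + J 5 4 (-1) 1 h) + (J 5 1 1 (-1) h + J 5 1 (-1) 1 h)"
      by (simp add: KCBS_D_def)
    have "F (p 1 h) (p 2 h) (p 3 h) (p 4 h) (p 5 h) \<le> 4"
      using p_range[of 1 h] p_range[of 2 h] p_range[of 3 h] p_range[of 4 h] p_range[of 5 h] h
      by (intro F5) auto
    then show ?thesis unfolding fexp gexp
      using ctxb[OF D(1) h] ctxb[OF D(2) h] ctxb[OF D(3) h] ctxb[OF D(4) h] ctxb[OF D(5) h]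
      by (simp add: F_def algebra_simps)
  qed
  show ?thesis
  proof (cases "integrable M ?f")
    case True
    have "(\<integral>h. ?f h \<partial>M) \<le> (\<integral>h. 4 + ?g h \<partial>M)"
      using True gint pw by (intro integral_mono) auto
    also have "\<dots> = 4 + (\<integral>h. ?g h \<partial>M)"
      using gint by (simp add: P.prob_space)
    finally show ?thesis using eps_avg by linarith
  next
    case False
    then show ?thesis using \<open>\<epsilon> \<ge> 0\<close> by (simp add: not_integrable_integral_eq)
  qed
qed

end
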